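(* Let $d=2$, let $a$ be feasible (a scalar function with $a\ge\alpha$ a.e., $a\in L^\infty(\Omega)$), with state $y$ and adjoint $p$. Suppose that for almost all $x_0\in\Omega$ and all $b\ge\alpha$, \[ -(b-a(x_0))\nabla y(x_0)\cdot\nabla p(x_0)+g(b)-g(a(x_0))+\frac12\frac{(b-a(x_0))^2}{b}\Big(\nabla y(x_0)\cdot\nabla p(x_0)-\|\nabla y(x_0)\|_2\|\nabla p(x_0)\|_2\Big)\ge0. \] Then for almost all $x_0\in\Omega$ and all $b\ge\alpha$, \[ -(b-a(x_0))\nabla y(x_0)\cdot\nabla p(x_0)\,\frac{a(x_0)\,d}{b+a(x_0)(d-1)}+g(b)-g(a(x_0))\ge0. \]
   Context: $\Omega\subset\mathbb R^2$ bounded domain, $\alpha>0$, $y_d,f\in L^2(\Omega)$, $g:[\alpha,\infty)\to\mathbb R\cup\{+\infty\}$ lower semicontinuous. The state $y\in H^1_0(\Omega)$ solves $\int_\Omega a\nabla y\cdot\nabla v=\int_\Omega fv$ and the adjoint $p\in H^1_0(\Omega)$ solves $\int_\Omega a\nabla v\cdot\nabla p=\int_\Omega(y-y_d)v$, for all $v\in H^1_0(\Omega)$. *)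

theory Defs
  imports "HOL-Analysis.Analysis"
begin

definition test_fun :: "(real^2) set \<Rightarrow> (real^2 \<Rightarrow> real) \<Rightarrow> (real^2 \<Rightarrow> real^2) \<Rightarrow> bool" where
  "test_fun \<Omega> \<phi> D \<longleftrightarrow>
     (\<forall>x. (\<phi> has_derivative (\<lambda>h. D x \<bullet> h)) (at x)) \<and> continuous_on UNIV D \<and>
     compact (closure {x. \<phi> x \<noteq> 0}) \<and> closure {x. \<phi> x \<noteq> 0} \<subseteq> \<Omega>"

definition sq_integrable :: "(real^2) set \<Rightarrow> (real^2 \<Rightarrow> real) \<Rightarrow> bool" where
  "sq_integrable \<Omega> u \<longleftrightarrow> u \<in> borel_measurable (lebesgue_on \<Omega>) \<and>
     integrable (lebesgue_on \<Omega>) (\<lambda>x. (u x)^2)"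

definition sq_integrable_vec :: "(real^2) set \<Rightarrow> (real^2 \<Rightarrow> real^2) \<Rightarrow> bool" where
  "sq_integrable_vec \<Omega> G \<longleftrightarrow> G \<in> borel_measurable (lebesgue_on \<Omega>) \<and>
     integrable (lebesgue_on \<Omega>) (\<lambda>x. (norm (G x))^2)"

definition has_weak_gradient :: "(real^2) set \<Rightarrow> (real^2 \<Rightarrow> real) \<Rightarrow> (real^2 \<Rightarrow> real^2) \<Rightarrow> bool" where
  "has_weak_gradient \<Omega> u G \<longleftrightarrow>
     u \<in> borel_measurable (lebesgue_on \<Omega>) \<and> G \<in> borel_measurable (lebesgue_on \<Omega>) \<and>
     (\<forall>K. compact K \<and> K \<subseteq> \<Omega> \<longrightarrow>
        integrable (lebesgue_on K) u \<and> integrable (lebesgue_on K) (\<lambda>x. norm (G x))) \<and>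
     (\<forall>\<phi> D. test_fun \<Omega> \<phi> D \<longrightarrow>
        (\<integral>x. u x *\<^sub>R D x \<partial>lebesgue_on \<Omega>) = - (\<integral>x. \<phi> x *\<^sub>R G x \<partial>lebesgue_on \<Omega>))"

definition in_H10 :: "(real^2) set \<Rightarrow> (real^2 \<Rightarrow> real) \<Rightarrow> (real^2 \<Rightarrow> real^2) \<Rightarrow> bool" where
  "in_H10 \<Omega> u G \<longleftrightarrow> sq_integrable \<Omega> u \<and> sq_integrable_vec \<Omega> G \<and> has_weak_gradient \<Omega> u G \<and>
     (\<exists>\<phi> D. (\<forall>n::nat. test_fun \<Omega> (\<phi> n) (D n)) \<and>
        (\<lambda>n. (\<integral>x. (\<phi> n x - u x)^2 \<partial>lebesgue_on \<Omega>) + (\<integral>x. (norm (D n x - G x))^2 \<partial>lebesgue_on \<Omega>))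
          \<longlonglongrightarrow> 0)"

definition lsc_on_ray :: "real \<Rightarrow> (real \<Rightarrow> ereal) \<Rightarrow> bool" where
  "lsc_on_ray \<alpha> g \<longleftrightarrow> (\<forall>x\<ge>\<alpha>. g x \<le> Liminf (at x within {\<alpha>..}) g)"

end

theory Submission
  imports Defs
begin

lemma keyr:
  fixes a b u m :: real
  assumes "a > 0" "b > 0" "\<bar>u\<bar> \<le> m"
  shows "- (b - a) * u + 1/2 * (b - a)^2 / b * (u - m) \<le> - (b - a) * u * (a * 2 / (b + a * (2 - 1)))"
proof -
  have h: "(b-a)*u + (b+a)*m \<ge> 0"
  proof -
    have "\<bar>(b-a)*u\<bar> \<le> (b+a)*m"
      using assms by (simp add: abs_mult mult_mono)
    then show ?thesis by linarith
  qed
  have e: "- (b - a) * u * (a * 2 / (b + a * (2 - 1))) - (- (b - a) * u + 1/2 * (b - a)^2 / b * (u - m))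
        = (b-a)^2 * ((b-a)*u + (b+a)*m) / (2*b*(b+a))"
    using assms by (simp add: field_simps) (simp add: algebra_simps power2_eq_square)
  have "(b-a)^2 * ((b-a)*u + (b+a)*m) / (2*b*(b+a)) \<ge> 0"
    using h assms by simp
  then show ?thesis using e by linarith
qed

lemma keye:
  fixes a b u m :: real and gb ga :: ereal
  assumes "a > 0" "b > 0" "\<bar>u\<bar> \<le> m" "gb \<noteq> -\<infinity>" "ga \<noteq> -\<infinity>"
   "ereal (- (b - a) * u) + gb - ga + ereal (1/2 * (b - a)^2 / b * (u - m)) \<ge> 0"
  shows "ereal (- (b - a) * u * (a * 2 / (b + a * (2 - 1)))) + gb - ga \<ge> 0"
proof -
  note k = keyr[OF assms(1-3)]
  show ?thesis
  proof (cases gb)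
    case (real x) note gbx = this
    show ?thesis
    proof (cases ga)
      case (real z)
      then show ?thesis using assms(6) k gbx by simp
    next
      case PInf then show ?thesis using assms(6) gbx by simp
    next
      case MInf then show ?thesis using assms(5) by simp
    qed
  next
    case PInf then show ?thesis by (cases ga) auto
  next
    case MInf then show ?thesis using assms(4) by simp
  qed
qed

theorem mainTheorem19:
  fixes \<Omega> :: "(real^2) set" and \<alpha> :: real
    and f y\<^sub>d a y p :: "real^2 \<Rightarrow> real" and Gy Gp :: "real^2 \<Rightarrow> real^2"
    and g :: "real \<Rightarrow> ereal"
  assumes dom: "open \<Omega>" "connected \<Omega>" "bounded \<Omega>" "\<Omega> \<noteq> {}"
    and alpha: "\<alpha> > 0"
    and data: "sq_integrable \<Omega> y\<^sub>d" "sq_integrable \<Omega> f"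
    and g_real: "\<forall>b\<ge>\<alpha>. g b \<noteq> -\<infinity>"
    and g_lsc: "lsc_on_ray \<alpha> g"
    and a_meas: "a \<in> borel_measurable (lebesgue_on \<Omega>)"
    and a_bdd: "\<exists>C. AE x in lebesgue_on \<Omega>. \<bar>a x\<bar> \<le> C"
    and a_ge: "AE x in lebesgue_on \<Omega>. a x \<ge> \<alpha>"
    and state: "in_H10 \<Omega> y Gy"
      "\<forall>v Gv. in_H10 \<Omega> v Gv \<longrightarrow>
         (\<integral>x. a x * (Gy x \<bullet> Gv x) \<partial>lebesgue_on \<Omega>) = (\<integral>x. f x * v x \<partial>lebesgue_on \<Omega>)"
    and adjoint: "in_H10 \<Omega> p Gp"
      "\<forall>v Gv. in_H10 \<Omega> v Gv \<longrightarrow>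
         (\<integral>x. a x * (Gv x \<bullet> Gp x) \<partial>lebesgue_on \<Omega>) = (\<integral>x. (y x - y\<^sub>d x) * v x \<partial>lebesgue_on \<Omega>)"
    and hyp: "AE x\<^sub>0 in lebesgue_on \<Omega>. \<forall>b\<ge>\<alpha>.
       ereal (- (b - a x\<^sub>0) * (Gy x\<^sub>0 \<bullet> Gp x\<^sub>0)) + g b - g (a x\<^sub>0)
       + ereal (1/2 * (b - a x\<^sub>0)^2 / b * (Gy x\<^sub>0 \<bullet> Gp x\<^sub>0 - norm (Gy x\<^sub>0) * norm (Gp x\<^sub>0))) \<ge> 0"
  shows "AE x\<^sub>0 in lebesgue_on \<Omega>. \<forall>b\<ge>\<alpha>.
       ereal (- (b - a x\<^sub>0) * (Gy x\<^sub>0 \<bullet> Gp x\<^sub>0) * (a x\<^sub>0 * 2 / (b + a x\<^sub>0 * (2 - 1))))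
       + g b - g (a x\<^sub>0) \<ge> 0"
proof -
  have "AE x in lebesgue_on \<Omega>. a x \<ge> \<alpha> \<and> (\<forall>b\<ge>\<alpha>.
       ereal (- (b - a x) * (Gy x \<bullet> Gp x)) + g b - g (a x)
       + ereal (1/2 * (b - a x)^2 / b * (Gy x \<bullet> Gp x - norm (Gy x) * norm (Gp x))) \<ge> 0)"
    using a_ge hyp by eventually_elim auto
  then show ?thesis
  proof eventually_elim
    case (elim x)
    show ?case
    proof (intro allI impI)
      fix b assume b: "b \<ge> \<alpha>"
      show "ereal (- (b - a x) * (Gy x \<bullet> Gp x) * (a x * 2 / (b + a x * (2 - 1)))) + g b - g (a x) \<ge> 0"
        apply (rule keye)
        using elim b alpha g_real Cauchy_Schwarz_ineq2[of "Gy x" "Gp x"] by auto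
    qed
  qed
qed

end
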